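(* Let $u$ be a weight on $\mathbb R$ with $u\notin L^1(\mathbb R)$ and $w$ a weight on $(0,\infty)$ with $w\notin L^1(0,\infty)$ and $w\in\Delta_2$. Then $u\in A_\infty$ and $w\in B^*_\infty$ if and only if for every $\varepsilon>0$ there exists $0<\eta<1$ such that $$W(u(S))\le\varepsilon W(u(I))$$ for every interval $I\subset\mathbb R$ and every measurable set $S\subseteq I$ with $|S|\le\eta|I|$.
   Context: A weight $u$ on $\mathbb R$ is locally integrable with $u>0$ a.e.; $u(E)=\int_Eu$. A weight $w$ on $(0,\infty)$ is nonnegative locally integrable, $W(t)=\int_0^tw$. $w\in\Delta_2$: $W(2r)\le CW(r)$ for all $r>0$. $u\in A_\infty$: there exist $C>0$, $\delta\in(0,1)$ with $u(E)/u(I)\le C(|E|/|I|)^\delta$ for all intervals $I$ and measurable $E\subset I$. $w\in B^*_\infty$: $\int_0^r\frac{W(t)}{t}\,dt\le CW(r)$ for all $r>0$. *)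

theory Defs
  imports "HOL-Analysis.Analysis"
begin

definition umeas :: "(real \<Rightarrow> real) \<Rightarrow> real set \<Rightarrow> real" where
  "umeas u E = set_lebesgue_integral lebesgue E u"

definition Wfun :: "(real \<Rightarrow> real) \<Rightarrow> real \<Rightarrow> real" where
  "Wfun w t = set_lebesgue_integral lebesgue {0..t} w"

definition weight_R :: "(real \<Rightarrow> real) \<Rightarrow> bool" where
  "weight_R u \<longleftrightarrow> (\<forall>K. compact K \<longrightarrow> set_integrable lebesgue K u)
     \<and> (AE x in lebesgue. u x > 0)"

definition weight_pos :: "(real \<Rightarrow> real) \<Rightarrow> bool" where
  "weight_pos w \<longleftrightarrow> (\<forall>x>0. w x \<ge> 0)
     \<and> (\<forall>t>0. set_integrable lebesgue {0..t} w)"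

definition Delta2 :: "(real \<Rightarrow> real) \<Rightarrow> bool" where
  "Delta2 w \<longleftrightarrow> (\<exists>C. \<forall>r>0. Wfun w (2*r) \<le> C * Wfun w r)"

definition A_infty :: "(real \<Rightarrow> real) \<Rightarrow> bool" where
  "A_infty u \<longleftrightarrow> (\<exists>C>0. \<exists>\<delta>. 0 < \<delta> \<and> \<delta> < 1 \<and>
     (\<forall>a b E. a < b \<longrightarrow> E \<in> sets lebesgue \<longrightarrow> E \<subseteq> {a..b} \<longrightarrow>
        umeas u E / umeas u {a..b} \<le> C * (measure lebesgue E / (b - a)) powr \<delta>))"

definition B_star_infty :: "(real \<Rightarrow> real) \<Rightarrow> bool" where
  "B_star_infty w \<longleftrightarrow> (\<exists>C. \<forall>r>0.
     (\<integral>\<^sup>+ t\<in>{0<..r}. ennreal (Wfun w t / t) \<partial>lebesgue) \<le> ennreal (C * Wfun w r))"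

end

theory Submission
  imports Defs
begin


definition nu :: "(real \<Rightarrow> real) \<Rightarrow> real measure" where
  "nu u = density lebesgue (\<lambda>x. ennreal (u x))"

lemma weight_R_meas:
  assumes "weight_R u" shows "u \<in> borel_measurable lebesgue"
proof -
  have i: "set_integrable lebesgue {-real n..real n} u" for n
    using assms unfolding weight_R_def by auto
  have m: "(\<lambda>x. indicator {-real n..real n} x *\<^sub>R u x) \<in> borel_measurable lebesgue" for n
    using i[of n] unfolding set_integrable_def by auto
  show ?thesis
  proof (rule borel_measurable_LIMSEQ_real[OF _ m])
    fix x
    obtain N where "\<bar>x\<bar> \<le> real N" using real_arch_simple by blast
    then have "eventually (\<lambda>n. indicator {-real n..real n} x *\<^sub>R u x = u x) sequentially"
      unfolding eventually_sequentially
      by (intro exI[of _ N]) (auto simp: indicator_def)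
    then show "(\<lambda>n. indicator {-real n..real n} x *\<^sub>R u x) \<longlonglongrightarrow> u x"
      by (simp add: tendsto_eventually)
  qed
qed

lemma weight_R_int:
  assumes "weight_R u" "E \<in> sets lebesgue" "E \<subseteq> {a..b}"
  shows "set_integrable lebesgue E u"
proof -
  have "set_integrable lebesgue {a..b} u" using assms unfolding weight_R_def by auto
  then show ?thesis using set_integrable_subset assms by blast
qed

lemma sets_nu[simp, measurable_cong]: "sets (nu u) = sets lebesgue"
  unfolding nu_def by simp

lemma emeasure_nu:
  assumes "weight_R u" "E \<in> sets lebesgue"
  shows "emeasure (nu u) E = (\<integral>\<^sup>+ x. ennreal (indicator E x * u x) \<partial>lebesgue)"
proof -
  have [measurable]: "u \<in> borel_measurable lebesgue" using weight_R_meas assms by blast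
  show ?thesis unfolding nu_def
    by (subst emeasure_density) (auto intro!: nn_integral_cong simp: assms indicator_def)
qed

lemma umeas_nu:
  assumes "weight_R u" "E \<in> sets lebesgue" "E \<subseteq> {a..b}"
  shows "umeas u E = enn2real (emeasure (nu u) E)" and "emeasure (nu u) E < \<infinity>"
proof -
  have si: "set_integrable lebesgue E u" using weight_R_int assms by blast
  have m: "(\<lambda>x. indicator E x * u x) \<in> borel_measurable lebesgue"
    using si unfolding set_integrable_def by auto
  have pos: "AE x in lebesgue. 0 < u x" using assms unfolding weight_R_def by auto
  have ae: "AE x in lebesgue. 0 \<le> indicator E x * u x"
    using pos by eventually_elim (auto simp: indicator_def)
  show "umeas u E = enn2real (emeasure (nu u) E)"
    unfolding umeas_def set_lebesgue_integral_def emeasure_nu[OF assms(1,2)]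
    using integral_eq_nn_integral[OF m ae] by simp
  have int: "integrable lebesgue (\<lambda>x. indicator E x * u x)" using si unfolding set_integrable_def by simp
  have "(\<integral>\<^sup>+ x. ennreal (indicator E x * u x) \<partial>lebesgue) < \<infinity>"
    using nn_integral_eq_integral[OF int ae] by simp
  then show "emeasure (nu u) E < \<infinity>" using emeasure_nu[OF assms(1,2)] by simp
qed

lemma nu_null:
  assumes "weight_R u" "E \<in> null_sets lebesgue"
  shows "emeasure (nu u) E = 0"
proof -
  have [measurable]: "u \<in> borel_measurable lebesgue" using weight_R_meas assms by blast
  have "AE x in lebesgue. x \<in> E \<longrightarrow> ennreal (u x) = 0"
    using AE_not_in[OF assms(2)] by eventually_elim auto
  then have "E \<in> null_sets (nu u)" unfolding nu_def
    using assms(2) by (subst null_sets_density_iff) auto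
  then show ?thesis by auto
qed

lemma nu_pos:
  assumes "weight_R u" "a < b"
  shows "emeasure (nu u) {a..b} > 0"
proof (rule ccontr)
  have [measurable]: "u \<in> borel_measurable lebesgue" using weight_R_meas assms by blast
  assume "\<not> ?thesis"
  then have "emeasure (nu u) {a..b} = 0" by simp
  then have "{a..b} \<in> null_sets (nu u)" by auto
  then have "AE x in lebesgue. x \<in> {a..b} \<longrightarrow> ennreal (u x) = 0"
    unfolding nu_def by (subst (asm) null_sets_density_iff) auto
  moreover have "AE x in lebesgue. 0 < u x" using assms unfolding weight_R_def by auto
  ultimately have "AE x in lebesgue. x \<notin> {a..b}" by eventually_elim auto
  then have "{a..b} \<in> null_sets lebesgue"
    by (simp add: AE_iff_null_sets)
  then show False using assms by auto
qed


lemma null0[simp]: "{0::real} \<in> null_sets lebesgue"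
  by simp

lemma AE_ne0: "AE x in lebesgue. (x::real) \<noteq> 0"
  using AE_not_in[OF null0] by simp

lemma wint:
  assumes "weight_pos w" "t > 0"
  shows "integrable lebesgue (\<lambda>x. indicator {0..t} x * w x)"
  using assms unfolding weight_pos_def set_integrable_def by auto

lemma W_le0:
  assumes "t \<le> 0" shows "Wfun w t = 0"
proof -
  have "AE x in lebesgue. indicator {0..t} x *\<^sub>R w x = 0"
    using AE_ne0 by eventually_elim (use assms in \<open>auto simp: indicator_def\<close>)
  then show ?thesis unfolding Wfun_def set_lebesgue_integral_def
    by (rule integral_eq_zero_AE)
qed

lemma W_nonneg:
  assumes "weight_pos w" shows "Wfun w t \<ge> 0"
proof -
  have "AE x in lebesgue. 0 \<le> indicator {0..t} x *\<^sub>R w x"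
    using AE_ne0 by eventually_elim (use assms in \<open>auto simp: indicator_def weight_pos_def\<close>)
  then show ?thesis unfolding Wfun_def set_lebesgue_integral_def
    by (rule integral_nonneg_AE)
qed

lemma W_mono:
  assumes "weight_pos w" "s \<le> t" shows "Wfun w s \<le> Wfun w t"
proof (cases "s \<le> 0")
  case True
  then show ?thesis using W_le0[OF True] W_nonneg[OF assms(1)] by simp
next
  case False
  then have "t > 0" "s > 0" using assms by auto
  have "integral\<^sup>L lebesgue (\<lambda>x. indicator {0..s} x * w x) \<le> integral\<^sup>L lebesgue (\<lambda>x. indicator {0..t} x * w x)"
  proof (rule integral_mono)
    show "integrable lebesgue (\<lambda>x. indicator {0..s} x * w x)" using wint[OF assms(1) \<open>s > 0\<close>] .
    show "integrable lebesgue (\<lambda>x. indicator {0..t} x * w x)" using wint[OF assms(1) \<open>t > 0\<close>] .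
    fix x show "indicator {0..s} x * w x \<le> indicator {0..t} x * w x"
      using assms \<open>s > 0\<close> by (auto simp: indicator_def weight_pos_def)
  qed
  then show ?thesis unfolding Wfun_def set_lebesgue_integral_def by simp
qed

lemma W_pos:
  assumes wp: "weight_pos w" and ni: "\<not> set_integrable lebesgue {0<..} w" and d: "Delta2 w"
    and "r > 0"
  shows "Wfun w r > 0"
proof (rule ccontr)
  assume "\<not> ?thesis"
  then have r0: "Wfun w r = 0" using W_nonneg[OF wp, of r] by simp
  obtain C where C: "\<And>r. r > 0 \<Longrightarrow> Wfun w (2*r) \<le> C * Wfun w r" using d unfolding Delta2_def by auto
  have k: "Wfun w (2^k * r) = 0" for k
  proof (induction k)
    case 0 then show ?case using r0 by simp
  next
    case (Suc k)
    have "Wfun w (2^Suc k * r) = Wfun w (2 * (2^k * r))" by (simp add: mult.assoc)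
    also have "\<dots> \<le> C * Wfun w (2^k*r)" using C \<open>r > 0\<close> by simp
    finally show ?case using Suc W_nonneg[OF wp, of "2^Suc k * r"] by simp
  qed
  have allz: "Wfun w t = 0" for t
  proof -
    obtain k where "t / r < 2^k" using real_arch_pow[of 2 "t/r"] by auto
    then have "t \<le> 2^k * r" using \<open>r > 0\<close> by (simp add: field_simps)
    then show ?thesis using W_mono[OF wp, of t "2^k*r"] k[of k] W_nonneg[OF wp, of t] by simp
  qed
  have h: "AE x in lebesgue. indicator {0..real n + 1} x * w x = 0" for n :: nat
  proof -
    have i: "integrable lebesgue (\<lambda>x. indicator {0..real n + 1} x * w x)"
      using wint[OF wp, of "real n + 1"] by simp
    have ae: "AE x in lebesgue. 0 \<le> indicator {0..real n + 1} x * w x"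
      using AE_ne0 by eventually_elim (use wp in \<open>auto simp: indicator_def weight_pos_def\<close>)
    have "integral\<^sup>L lebesgue (\<lambda>x. indicator {0..real n + 1} x * w x) = 0"
      using allz[of "real n + 1"] unfolding Wfun_def set_lebesgue_integral_def by simp
    then show ?thesis using integral_nonneg_eq_0_iff_AE[OF i ae] by simp
  qed
  then have "AE x in lebesgue. \<forall>n::nat. indicator {0..real n + 1} x * w x = 0"
    by (subst AE_all_countable) (use h in blast)
  then have ae0: "AE x in lebesgue. indicator {0<..} x * w x = 0"
  proof eventually_elim
    case (elim x)
    show ?case
    proof (cases "x > 0")
      case True
      obtain n :: nat where "x \<le> real n" using real_arch_simple by blast
      then show ?thesis using elim[rule_format, of n] True by (auto simp: indicator_def)
    qed simp
  qed
  have meas: "(\<lambda>x. indicator {0<..} x * w x) \<in> borel_measurable lebesgue"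
  proof (rule borel_measurable_LIMSEQ_real)
    fix n :: nat
    have "0 < real n + 1" by simp
    show "(\<lambda>x. indicator {0<..} x * (indicator {0..real n + 1} x * w x)) \<in> borel_measurable lebesgue"
      by (rule borel_measurable_times[OF borel_measurable_indicator borel_measurable_integrable[OF wint[OF wp \<open>0 < real n + 1\<close>]]]) simp
  next
    fix x :: real
    have "eventually (\<lambda>n. indicator {0<..} x * (indicator {0..real n + 1} x * w x) = indicator {0<..} x * w x) sequentially"
    proof (cases "x > 0")
      case True
      obtain N :: nat where "x \<le> real N" using real_arch_simple by blast
      then show ?thesis unfolding eventually_sequentially
        by (intro exI[of _ N]) (auto simp: indicator_def)
    qed simp
    then show "(\<lambda>n. indicator {0<..} x * (indicator {0..real n + 1} x * w x)) \<longlonglongrightarrow> indicator {0<..} x * w x"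
      by (simp add: tendsto_eventually)
  qed
  have ae1: "AE x in lebesgue. 0 = indicator {0<..} x * w x" using ae0 by eventually_elim simp
  have "integrable lebesgue (\<lambda>x. indicator {0<..} x * w x)"
    by (rule integrable_cong_AE_imp[OF integrable_zero meas ae1])
  then have "set_integrable lebesgue {0<..} w" unfolding set_integrable_def by simp
  then show False using ni by simp
qed

lemma Delta2_D:
  assumes wp: "weight_pos w" and ni: "\<not> set_integrable lebesgue {0<..} w" and d: "Delta2 w"
  obtains D where "D > 0" "\<And>r. r > 0 \<Longrightarrow> Wfun w (2*r) \<le> D * Wfun w r"
proof -
  obtain C where C: "\<And>r. r > 0 \<Longrightarrow> Wfun w (2*r) \<le> C * Wfun w r" using d unfolding Delta2_def by auto
  have "Wfun w 2 > 0" "Wfun w 1 > 0" using W_pos[OF wp ni d] by auto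
  then have "C > 0" using C[of 1] by (smt (verit) mult_nonpos_nonneg)
  then show ?thesis using C that by blast
qed


lemma ln_has_int:
  fixes c r :: real
  assumes "0 < c" "c \<le> r"
  shows "((\<lambda>t. 1 / t) has_integral (ln r - ln c)) {c..r}"
proof (rule fundamental_theorem_of_calculus[of c r ln "\<lambda>t. 1 / t"])
  show "c \<le> r" by fact
next
  fix x assume "x \<in> {c..r}"
  then have "x > 0" using assms by auto
  then show "(ln has_vector_derivative 1 / x) (at x within {c..r})"
    using DERIV_ln_divide[OF \<open>x > 0\<close>]
    by (simp add: has_real_derivative_iff_has_vector_derivative[symmetric] has_field_derivative_at_within)
qed

lemma Bstar_decay:
  assumes wp: "weight_pos w" and b: "B_star_infty w"
  obtains K where "K \<ge> 0" "\<And>r c. 0 < c \<Longrightarrow> c \<le> r \<Longrightarrow> Wfun w c * ln (r / c) \<le> K * Wfun w r"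
proof -
  obtain C where C: "\<And>r. r > 0 \<Longrightarrow> (\<integral>\<^sup>+ t\<in>{0<..r}. ennreal (Wfun w t / t) \<partial>lebesgue) \<le> ennreal (C * Wfun w r)"
    using b unfolding B_star_infty_def by auto
  have main: "Wfun w c * ln (r / c) \<le> \<bar>C\<bar> * Wfun w r" if c: "0 < c" "c \<le> r" for r c
  proof -
    have r: "r > 0" using c by simp
    have hi: "((\<lambda>t. Wfun w c * (1 / t)) has_integral (Wfun w c * (ln r - ln c))) {c..r}"
      using has_integral_mult_right[OF ln_has_int[OF c]] by simp
    have "ennreal (Wfun w c * (ln r - ln c)) = (\<integral>\<^sup>+ t. ennreal (indicator {c..r} t * (Wfun w c * (1 / t))) \<partial>lborel)"
      by (rule nn_integral_has_integral_lebesgue[OF _ hi, symmetric])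
         (use c W_nonneg[OF wp] in auto)
    also have "\<dots> = (\<integral>\<^sup>+ t. ennreal (indicator {c..r} t * (Wfun w c * (1 / t))) \<partial>lebesgue)"
      by (simp add: nn_integral_completion)
    also have "\<dots> \<le> (\<integral>\<^sup>+ t\<in>{0<..r}. ennreal (Wfun w t / t) \<partial>lebesgue)"
    proof (rule nn_integral_mono)
      fix t
      show "ennreal (indicator {c..r} t * (Wfun w c * (1 / t))) \<le> ennreal (Wfun w t / t) * indicator {0<..r} t"
      proof (cases "t \<in> {c..r}")
        case True
        then have t: "t > 0" "c \<le> t" "t \<le> r" using c by auto
        have "Wfun w c / t \<le> Wfun w t / t"
          using W_mono[OF wp t(2)] t by (simp add: divide_right_mono)
        then show ?thesis using True t by (auto simp: indicator_def intro: ennreal_leI)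
      qed (simp add: indicator_def)
    qed
    also have "\<dots> \<le> ennreal (C * Wfun w r)" using C[OF r] .
    finally have le: "ennreal (Wfun w c * (ln r - ln c)) \<le> ennreal (C * Wfun w r)" .
    have nn: "0 \<le> Wfun w c * (ln r - ln c)"
      using W_nonneg[OF wp, of c] c by (simp add: ln_le_cancel_iff)
    have Wr: "0 \<le> Wfun w r" using W_nonneg[OF wp] .
    have "Wfun w c * (ln r - ln c) \<le> \<bar>C\<bar> * Wfun w r"
    proof (cases "C * Wfun w r \<ge> 0")
      case True
      then have "Wfun w c * (ln r - ln c) \<le> C * Wfun w r" using le ennreal_le_iff by blast
      also have "\<dots> \<le> \<bar>C\<bar> * Wfun w r" using Wr by (simp add: mult_right_mono)
      finally show ?thesis .
    next
      case False
      then have "ennreal (Wfun w c * (ln r - ln c)) = 0" using le by (simp add: ennreal_neg)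
      then have "Wfun w c * (ln r - ln c) \<le> 0" using ennreal_eq_0_iff by blast
      then show ?thesis using Wr by (smt (verit) mult_nonneg_nonneg abs_ge_zero)
    qed
    then show ?thesis using c by (simp add: ln_div)
  qed
  show ?thesis using that[of "\<bar>C\<bar>"] main by auto
qed


lemma umeas_pos:
  assumes "weight_R u" "a < b" shows "umeas u {a..b} > 0"
  using umeas_nu[OF assms(1) _ order_refl, of a b] nu_pos[OF assms]
  by (simp add: enn2real_positive_iff)

lemma forward:
  assumes wu: "weight_R u" and wp: "weight_pos w" and A: "A_infty u" and B: "B_star_infty w"
  shows "\<forall>\<epsilon>>0. \<exists>\<eta>. 0 < \<eta> \<and> \<eta> < 1 \<and>
       (\<forall>a b S. a < b \<longrightarrow> S \<in> sets lebesgue \<longrightarrow> S \<subseteq> {a..b} \<longrightarrow>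
          measure lebesgue S \<le> \<eta> * (b - a) \<longrightarrow>
          Wfun w (umeas u S) \<le> \<epsilon> * Wfun w (umeas u {a..b}))"
proof (intro allI impI)
  fix \<epsilon> :: real assume e: "\<epsilon> > 0"
  obtain K where K: "K \<ge> 0" "\<And>r c. 0 < c \<Longrightarrow> c \<le> r \<Longrightarrow> Wfun w c * ln (r / c) \<le> K * Wfun w r"
    using Bstar_decay[OF wp B] by blast
  obtain CA \<delta> where CA: "CA > 0" "0 < \<delta>" "\<delta> < 1" and
    Ai: "\<And>a b E. a < b \<Longrightarrow> E \<in> sets lebesgue \<Longrightarrow> E \<subseteq> {a..b} \<Longrightarrow>
        umeas u E / umeas u {a..b} \<le> CA * (measure lebesgue E / (b - a)) powr \<delta>"
    using A unfolding A_infty_def by blast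
  define lam where "lam = exp (- ((K + 1) / \<epsilon>))"
  have l0: "0 < lam" "lam \<le> 1" using K e unfolding lam_def by auto
  have dec: "Wfun w (lam * r) \<le> \<epsilon> * Wfun w r" if r: "r > 0" for r
  proof -
    have "r / (lam * r) = exp ((K + 1) / \<epsilon>)" using r unfolding lam_def
      by (simp add: exp_minus field_simps)
    then have "ln (r / (lam * r)) = (K + 1) / \<epsilon>" by simp
    then have "Wfun w (lam * r) * ((K + 1) / \<epsilon>) \<le> K * Wfun w r"
      using K(2)[of "lam * r" r] r l0 by (simp add: mult_left_le_one_le)
    then have "Wfun w (lam * r) * (K + 1) \<le> \<epsilon> * K * Wfun w r"
      using e by (simp add: field_simps)
    also have "\<dots> \<le> \<epsilon> * (K + 1) * Wfun w r"
      using e W_nonneg[OF wp, of r] by (intro mult_right_mono mult_left_mono) auto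
    finally show ?thesis using K(1) by (simp add: mult.commute mult.left_commute)
  qed
  define \<eta> where "\<eta> = min (1/2) ((lam / CA) powr (1 / \<delta>))"
  have eta: "0 < \<eta>" "\<eta> < 1" using l0 CA unfolding \<eta>_def by auto
  have etap: "CA * \<eta> powr \<delta> \<le> lam"
  proof -
    have "\<eta> powr \<delta> \<le> ((lam / CA) powr (1 / \<delta>)) powr \<delta>"
      using eta CA unfolding \<eta>_def by (intro powr_mono2) auto
    also have "\<dots> = lam / CA" using CA l0 by (simp add: powr_powr)
    finally show ?thesis using CA by (simp add: field_simps)
  qed
  show "\<exists>\<eta>. 0 < \<eta> \<and> \<eta> < 1 \<and>
       (\<forall>a b S. a < b \<longrightarrow> S \<in> sets lebesgue \<longrightarrow> S \<subseteq> {a..b} \<longrightarrow>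
          measure lebesgue S \<le> \<eta> * (b - a) \<longrightarrow>
          Wfun w (umeas u S) \<le> \<epsilon> * Wfun w (umeas u {a..b}))"
  proof (intro exI[of _ \<eta>] conjI eta allI impI)
    fix a b S assume ab: "a < b" and S: "S \<in> sets lebesgue" "S \<subseteq> {a..b}"
      and mS: "measure lebesgue S \<le> \<eta> * (b - a)"
    have I0: "umeas u {a..b} > 0" using umeas_pos[OF wu ab] .
    have "(measure lebesgue S / (b - a)) powr \<delta> \<le> \<eta> powr \<delta>"
      using mS ab CA by (intro powr_mono2) (auto simp: field_simps)
    then have "umeas u S / umeas u {a..b} \<le> lam"
      using Ai[OF ab S] etap CA by (smt (verit) mult_left_mono)
    then have uS: "umeas u S \<le> lam * umeas u {a..b}" using I0 by (simp add: field_simps)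
    have "Wfun w (umeas u S) \<le> Wfun w (lam * umeas u {a..b})" using W_mono[OF wp uS] .
    also have "\<dots> \<le> \<epsilon> * Wfun w (umeas u {a..b})" using dec[OF I0] .
    finally show "Wfun w (umeas u S) \<le> \<epsilon> * Wfun w (umeas u {a..b})" .
  qed
qed


lemma cz_step:
  fixes N :: "real measure" and F :: "real set"
  assumes sN: "sets N = sets lebesgue"
    and th: "0 < \<theta>" "\<theta> < 1/2"
    and H: "\<And>a b S. a < b \<Longrightarrow> S \<in> sets lebesgue \<Longrightarrow> S \<subseteq> {a..b} \<Longrightarrow>
             emeasure lebesgue S \<le> ennreal (2*\<theta>*(b-a)) \<Longrightarrow> 2 * emeasure N S \<le> emeasure N {a..b}"
    and nullN: "\<And>x. emeasure N {x} = 0"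
    and ab: "a < b"
    and Fm: "F \<in> sets lebesgue" and Fs: "F \<subseteq> {a..<b}"
    and Fo: "\<And>x. x \<in> F \<Longrightarrow> \<exists>r>0. \<forall>y. a \<le> y \<longrightarrow> y < b \<longrightarrow> \<bar>y - x\<bar> < r \<longrightarrow> y \<in> F"
    and small: "measure lebesgue F \<le> \<theta> * (b - a)"
  obtains \<Omega> where "\<Omega> \<in> sets lebesgue" "\<Omega> \<subseteq> {a..<b}" "2 * emeasure N F \<le> emeasure N \<Omega>"
    "ennreal \<theta> * emeasure lebesgue \<Omega> \<le> emeasure lebesgue F"
proof -
  define h where "h n = (b - a) / 2^n" for n :: nat
  define \<kappa> where "\<kappa> n x = \<lfloor>(x - a) / h n\<rfloor>" for n x
  define Q where "Q n x = {y. \<kappa> n y = \<kappa> n x}" for n x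
  define big where "big n x \<longleftrightarrow> \<theta> * h n < measure lebesgue (F \<inter> Q n x)" for n x
  define Sel where "Sel n = {x \<in> {a..<b}. big n x \<and> (\<forall>m<n. \<not> big m x)}" for n
  define \<Omega> where "\<Omega> = (\<Union>n. Sel n)"
  have hpos: "h n > 0" for n using ab by (simp add: h_def)
  have Qint: "Q n x = {a + real_of_int (\<kappa> n x) * h n ..< a + (real_of_int (\<kappa> n x) + 1) * h n}" for n x
  proof -
    have "y \<in> Q n x \<longleftrightarrow> y \<in> {a + real_of_int (\<kappa> n x) * h n ..< a + (real_of_int (\<kappa> n x) + 1) * h n}" for y
    proof -
      have "y \<in> Q n x \<longleftrightarrow> real_of_int (\<kappa> n x) \<le> (y - a) / h n \<and> (y - a) / h n < real_of_int (\<kappa> n x) + 1"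
        unfolding Q_def \<kappa>_def by (simp add: floor_eq_iff)
      also have "\<dots> \<longleftrightarrow> real_of_int (\<kappa> n x) * h n \<le> y - a \<and> y - a < (real_of_int (\<kappa> n x) + 1) * h n"
        using hpos[of n] by (simp add: pos_le_divide_eq pos_divide_less_eq)
      finally show ?thesis by auto
    qed
    then show ?thesis by blast
  qed
  have xQ: "x \<in> Q n x" for n x by (simp add: Q_def)
  have krange: "0 \<le> \<kappa> n x \<and> \<kappa> n x < 2^n" if "x \<in> {a..<b}" for n x
  proof -
    have "0 \<le> (x - a) / h n" using that hpos[of n] by simp
    moreover have "(x - a) / h n < 2^n"
      using that ab by (simp add: h_def field_simps)
    ultimately show ?thesis unfolding \<kappa>_def by (simp add: floor_less_iff)
  qed
  have Qsub: "Q n x \<subseteq> {a..<b}" if "x \<in> {a..<b}" for n x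
  proof -
    have k: "0 \<le> \<kappa> n x" "\<kappa> n x + 1 \<le> 2^n" using krange[OF that, of n] by auto
    have "real_of_int (\<kappa> n x) + 1 \<le> 2^n" using k(2)
      by (metis of_int_1 of_int_add of_int_le_iff of_int_numeral of_int_power)
    then have "(real_of_int (\<kappa> n x) + 1) * h n \<le> 2^n * h n" using hpos[of n] by (simp add: mult_right_mono)
    also have "\<dots> = b - a" by (simp add: h_def)
    finally have "a + (real_of_int (\<kappa> n x) + 1) * h n \<le> b" by simp
    moreover have "a \<le> a + real_of_int (\<kappa> n x) * h n" using k(1) hpos[of n] by simp
    ultimately show ?thesis unfolding Qint by auto
  qed
  have Qmeas: "Q n x \<in> sets lebesgue" for n x unfolding Qint by simp
  have Qlen: "emeasure lebesgue (Q n x) = ennreal (h n)" for n x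
    unfolding Qint using hpos[of n] by (simp add: algebra_simps)
  have Qrad: "\<bar>y - x\<bar> < h n" if "y \<in> Q n x" for n x y
    using that xQ[of x n] unfolding Qint by (simp add: distrib_right abs_less_iff)
  have kdiv: "\<kappa> m y = \<kappa> n y div 2^(n-m)" if "m \<le> n" for m n y
  proof -
    have hm: "h m = h n * 2^(n-m)" using that by (simp add: h_def power_diff)
    have e: "(y - a) / h m = ((y - a) / h n) / real_of_int (2^(n-m))" by (simp add: hm)
    show ?thesis unfolding \<kappa>_def e by (rule floor_divide_real_eq_div) simp
  qed
  have Qnest: "Q m y = Q m x" if "m \<le> n" "y \<in> Q n x" for m n x y
    using that kdiv[OF that(1), of y] kdiv[OF that(1), of x] by (simp add: Q_def)
  have Qsubm: "Q n x \<subseteq> Q m x" if "m \<le> n" for m n x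
    using Qnest[OF that] xQ by blast
  have Qeq: "Q n x = Q n y" if "Q n x \<inter> Q n y \<noteq> {}" for n x y
    using that unfolding Q_def by auto
  have Fb: "bounded F" using Fs by (intro bounded_subset[OF bounded_closed_interval[of a b]]) auto
  have Fl: "F \<in> lmeasurable" using Fb Fm by (simp add: bounded_set_imp_lmeasurable)
  have FQfin: "emeasure lebesgue (F \<inter> Q n x) = ennreal (measure lebesgue (F \<inter> Q n x))" for n x
  proof (rule emeasure_eq_ennreal_measure)
    have "emeasure lebesgue (F \<inter> Q n x) \<le> emeasure lebesgue F" by (rule emeasure_mono) (use Fm in auto)
    moreover have "emeasure lebesgue F < \<infinity>" using Fl unfolding fmeasurable_def by blast
    ultimately show "emeasure lebesgue (F \<inter> Q n x) \<noteq> top" by (simp add: top.not_eq_extremum)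
  qed
  have mFQ: "measure lebesgue (F \<inter> Q n x) \<le> measure lebesgue (F \<inter> Q m x)" if "m \<le> n" for m n x
    by (rule measure_mono_fmeasurable) (use Qsubm[OF that, of x] Fm Qmeas fmeasurable_Int_fmeasurable[OF Fl Qmeas[of m x]] in auto)
  have SelQ: "y \<in> Sel n" if "x \<in> Sel n" "y \<in> Q n x" for n x y
  proof -
    have "x \<in> {a..<b}" using that(1) by (simp add: Sel_def)
    then have "y \<in> {a..<b}" using Qsub that(2) by blast
    moreover have "big m y = big m x" if "m \<le> n" for m
      using Qnest[OF that \<open>y \<in> Q n x\<close>] by (simp add: big_def)
    ultimately show ?thesis using that(1) unfolding Sel_def by auto
  qed
  have Sel0: "Sel 0 = {}"
  proof -
    have "\<not> big 0 x" for x
    proof -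
      have "measure lebesgue (F \<inter> Q 0 x) \<le> measure lebesgue F"
        by (rule measure_mono_fmeasurable) (use Fm Qmeas Fl in auto)
      then show ?thesis using small by (simp add: big_def h_def)
    qed
    then show ?thesis by (simp add: Sel_def)
  qed
  have SelH: "2 * emeasure N (F \<inter> Q n x) \<le> emeasure N (Q n x)" if "x \<in> Sel n" for n x
  proof -
    have "n \<noteq> 0"
    proof
      assume "n = 0" then show False using that Sel0 by simp
    qed
    then obtain m where n: "n = Suc m" by (cases n) auto
    have "\<not> big m x" using that n by (simp add: Sel_def)
    then have "measure lebesgue (F \<inter> Q m x) \<le> \<theta> * h m" by (simp add: big_def)
    moreover have "h m = 2 * h n" using n by (simp add: h_def field_simps)
    ultimately have le: "measure lebesgue (F \<inter> Q n x) \<le> 2 * \<theta> * h n"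
      using mFQ[of m n x] n by simp
    define lo where "lo = a + real_of_int (\<kappa> n x) * h n"
    define hi where "hi = a + (real_of_int (\<kappa> n x) + 1) * h n"
    have Q': "Q n x = {lo..<hi}" unfolding lo_def hi_def Qint ..
    have hl: "hi - lo = h n" unfolding lo_def hi_def by (simp add: algebra_simps)
    have lohi: "lo < hi" using hl hpos[of n] by simp
    have "2 * emeasure N (F \<inter> Q n x) \<le> emeasure N {lo..hi}"
    proof (rule H[OF lohi])
      show "F \<inter> Q n x \<in> sets lebesgue" using Fm Qmeas by auto
      show "F \<inter> Q n x \<subseteq> {lo..hi}" using Q' by auto
      show "emeasure lebesgue (F \<inter> Q n x) \<le> ennreal (2 * \<theta> * (hi - lo))"
        using le FQfin hl by (simp add: ennreal_leI)
    qed
    also have "\<dots> \<le> emeasure N (Q n x) + emeasure N {hi}"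
    proof -
      have "{lo..hi} = Q n x \<union> {hi}" using Q' lohi by auto
      then show ?thesis using emeasure_subadditive[of "Q n x" N "{hi}"] Qmeas sN by simp
    qed
    also have "\<dots> = emeasure N (Q n x)" using nullN by simp
    finally show ?thesis .
  qed
  have Selbig: "ennreal \<theta> * emeasure lebesgue (Q n x) \<le> emeasure lebesgue (F \<inter> Q n x)" if "x \<in> Sel n" for n x
  proof -
    have "\<theta> * h n < measure lebesgue (F \<inter> Q n x)" using that by (simp add: Sel_def big_def)
    then show ?thesis using th hpos[of n] by (simp add: Qlen FQfin ennreal_mult[symmetric])
  qed
  define QS where "QS n = (\<lambda>x. Q n x) ` Sel n" for n
  have QSfin: "finite (QS n)" for n
  proof -
    have "QS n \<subseteq> (\<lambda>j. {a + real_of_int j * h n ..< a + (real_of_int j + 1) * h n}) ` {0..<2^n}"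
      unfolding QS_def Sel_def using krange Qint by auto
    then show ?thesis by (rule finite_subset) simp
  qed
  have QSmeas: "QS n \<subseteq> sets lebesgue" for n unfolding QS_def using Qmeas by auto
  have QSdisj: "disjoint_family_on (\<lambda>X. X) (QS n)" for n
    unfolding disjoint_family_on_def QS_def using Qeq by blast
  have QSdisjF: "disjoint_family_on (\<lambda>X. F \<inter> X) (QS n)" for n
    unfolding disjoint_family_on_def QS_def using Qeq by blast
  have SelU: "Sel n = (\<Union>X\<in>QS n. X)" for n
    unfolding QS_def using xQ SelQ by blast
  have SelUF: "F \<inter> Sel n = (\<Union>X\<in>QS n. F \<inter> X)" for n
    using SelU[of n] by blast
  have Selm: "Sel n \<in> sets lebesgue" for n
    unfolding SelU using QSfin QSmeas by (intro sets.finite_UN) auto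
  have sum1: "2 * emeasure N (F \<inter> Sel n) \<le> emeasure N (Sel n)" for n
  proof -
    have "emeasure N (F \<inter> Sel n) = (\<Sum>X\<in>QS n. emeasure N (F \<inter> X))"
      unfolding SelUF using QSfin QSmeas QSdisjF Fm sN by (subst sum_emeasure) auto
    moreover have "emeasure N (Sel n) = (\<Sum>X\<in>QS n. emeasure N X)"
      unfolding SelU using QSfin QSmeas QSdisj sN by (subst sum_emeasure) auto
    moreover have "2 * (\<Sum>X\<in>QS n. emeasure N (F \<inter> X)) \<le> (\<Sum>X\<in>QS n. emeasure N X)"
      unfolding sum_distrib_left by (rule sum_mono) (use SelH in \<open>auto simp: QS_def\<close>)
    ultimately show ?thesis by simp
  qed
  have sum2: "ennreal \<theta> * emeasure lebesgue (Sel n) \<le> emeasure lebesgue (F \<inter> Sel n)" for n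
  proof -
    have "emeasure lebesgue (F \<inter> Sel n) = (\<Sum>X\<in>QS n. emeasure lebesgue (F \<inter> X))"
      unfolding SelUF using QSfin QSmeas QSdisjF Fm by (subst sum_emeasure) auto
    moreover have "emeasure lebesgue (Sel n) = (\<Sum>X\<in>QS n. emeasure lebesgue X)"
      unfolding SelU using QSfin QSmeas QSdisj by (subst sum_emeasure) auto
    moreover have "ennreal \<theta> * (\<Sum>X\<in>QS n. emeasure lebesgue X) \<le> (\<Sum>X\<in>QS n. emeasure lebesgue (F \<inter> X))"
      unfolding sum_distrib_left by (rule sum_mono) (use Selbig in \<open>auto simp: QS_def\<close>)
    ultimately show ?thesis by simp
  qed
  have Seldisj: "disjoint_family Sel"
    unfolding disjoint_family_on_def Sel_def by (auto simp: linorder_neq_iff)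
  have SeldisjF: "disjoint_family (\<lambda>n. F \<inter> Sel n)"
    using Seldisj unfolding disjoint_family_on_def by auto
  have FO: "F \<subseteq> \<Omega>"
  proof
    fix x assume x: "x \<in> F"
    then have xab: "x \<in> {a..<b}" using Fs by auto
    obtain r where r: "r > 0" "\<And>y. a \<le> y \<Longrightarrow> y < b \<Longrightarrow> \<bar>y - x\<bar> < r \<Longrightarrow> y \<in> F"
      using Fo[OF x] by blast
    obtain n where n: "(b - a) / r < 2^n" using real_arch_pow[of 2 "(b - a) / r"] by auto
    then have hr: "h n < r" using r(1) ab by (simp add: h_def field_simps)
    have "Q n x \<subseteq> F"
    proof
      fix y assume y: "y \<in> Q n x"
      then show "y \<in> F" using r(2)[of y] Qrad[OF y] hr Qsub[OF xab, of n] by auto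
    qed
    then have "F \<inter> Q n x = Q n x" by auto
    then have "measure lebesgue (F \<inter> Q n x) = h n"
      using Qlen[of n x] hpos[of n] by (simp add: measure_def)
    then have bn: "big n x" using th hpos[of n] by (simp add: big_def)
    define m where "m = (LEAST m. big m x)"
    have "big m x" unfolding m_def by (rule LeastI[of _ n]) (rule bn)
    moreover have "\<not> big k x" if "k < m" for k using not_less_Least[OF that[unfolded m_def]] .
    ultimately have "x \<in> Sel m" using xab by (simp add: Sel_def)
    then show "x \<in> \<Omega>" by (auto simp: \<Omega>_def)
  qed
  have Om: "\<Omega> \<in> sets lebesgue" unfolding \<Omega>_def using Selm by auto
  have Os: "\<Omega> \<subseteq> {a..<b}" unfolding \<Omega>_def Sel_def by auto
  have FU: "F = (\<Union>n. F \<inter> Sel n)" using FO unfolding \<Omega>_def by auto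
  have rF: "range (\<lambda>n. F \<inter> Sel n) \<subseteq> sets N" using Selm Fm sN by auto
  have rFl: "range (\<lambda>n. F \<inter> Sel n) \<subseteq> sets lebesgue" using Selm Fm by auto
  have eqN: "emeasure N F = (\<Sum>n. emeasure N (F \<inter> Sel n))"
    by (subst (1) FU) (rule suminf_emeasure[OF rF SeldisjF, symmetric])
  have eqL: "emeasure lebesgue F = (\<Sum>n. emeasure lebesgue (F \<inter> Sel n))"
    by (subst (1) FU) (rule suminf_emeasure[OF rFl SeldisjF, symmetric])
  have "2 * emeasure N F = 2 * (\<Sum>n. emeasure N (F \<inter> Sel n))"
    using eqN by simp
  also have "\<dots> = (\<Sum>n. 2 * emeasure N (F \<inter> Sel n))" by simp
  also have "\<dots> \<le> (\<Sum>n. emeasure N (Sel n))" by (rule suminf_le) (use sum1 in auto)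
  also have "\<dots> = emeasure N \<Omega>"
    unfolding \<Omega>_def using suminf_emeasure[of Sel N] Seldisj Selm sN by auto
  finally have c1: "2 * emeasure N F \<le> emeasure N \<Omega>" .
  have rS: "range Sel \<subseteq> sets lebesgue" using Selm by auto
  have eqO: "emeasure lebesgue \<Omega> = (\<Sum>n. emeasure lebesgue (Sel n))"
    unfolding \<Omega>_def by (rule suminf_emeasure[OF rS Seldisj, symmetric])
  have "ennreal \<theta> * emeasure lebesgue \<Omega> = ennreal \<theta> * (\<Sum>n. emeasure lebesgue (Sel n))"
    using eqO by simp
  also have "\<dots> = (\<Sum>n. ennreal \<theta> * emeasure lebesgue (Sel n))" by simp
  also have "\<dots> \<le> (\<Sum>n. emeasure lebesgue (F \<inter> Sel n))" by (rule suminf_le) (use sum2 in auto)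
  also have "\<dots> = emeasure lebesgue F"
    using eqL by simp
  finally have c2: "ennreal \<theta> * emeasure lebesgue \<Omega> \<le> emeasure lebesgue F" .
  show ?thesis using that[OF Om Os c1 c2] .
qed


lemma open_lebesgue: "open (T::real set) \<Longrightarrow> T \<in> sets lebesgue"
  by (simp add: borel_open)

lemma cz_induct:
  fixes N :: "real measure"
  assumes sN: "sets N = sets lebesgue"
    and th: "0 < \<theta>" "\<theta> < 1/2"
    and H: "\<And>a b S. a < b \<Longrightarrow> S \<in> sets lebesgue \<Longrightarrow> S \<subseteq> {a..b} \<Longrightarrow>
             emeasure lebesgue S \<le> ennreal (2*\<theta>*(b-a)) \<Longrightarrow> 2 * emeasure N S \<le> emeasure N {a..b}"
    and nullN: "\<And>x. emeasure N {x} = 0"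
  shows "a < b \<Longrightarrow> E \<in> sets lebesgue \<Longrightarrow> E \<subseteq> {a..b} \<Longrightarrow>
     emeasure lebesgue E < ennreal (\<theta>^k * (b-a)) \<Longrightarrow> 2^k * emeasure N E \<le> emeasure N {a..b}"
proof (induction k arbitrary: a b E)
  case 0
  then show ?case by (simp add: emeasure_mono sN)
next
  case (Suc k)
  note ab = Suc.prems(1) and Em = Suc.prems(2) and Es = Suc.prems(3) and Elt = Suc.prems(4)
  have El: "E \<in> lmeasurable"
    using Em Es by (intro bounded_set_imp_lmeasurable bounded_subset[OF bounded_closed_interval[of a b]]) auto
  define c where "c = \<theta>^Suc k * (b - a)"
  have Ee: "emeasure lebesgue E = ennreal (measure lebesgue E)"
    using El by (simp add: emeasure_eq_measure2)
  have mE: "measure lebesgue E < c" using Elt Ee unfolding c_def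
    by (simp add: ennreal_less_iff)
  obtain T where T: "open T" "E \<subseteq> T" "(T - E) \<in> lmeasurable" "emeasure lebesgue (T - E) < ennreal (c - measure lebesgue E)"
    using sets_lebesgue_outer_open[OF Em, of "c - measure lebesgue E"] mE by auto
  define F where "F = T \<inter> {a..<b}"
  have Tm: "T \<in> sets lebesgue" using open_lebesgue[OF T(1)] .
  have Fm: "F \<in> sets lebesgue" unfolding F_def using Tm by auto
  have Fs: "F \<subseteq> {a..<b}" unfolding F_def by auto
  have "emeasure lebesgue F \<le> emeasure lebesgue T" unfolding F_def by (rule emeasure_mono) (use Tm in auto)
  also have "\<dots> \<le> emeasure lebesgue E + emeasure lebesgue (T - E)"
  proof -
    have "T = E \<union> (T - E)" using T(2) by auto
    then show ?thesis using emeasure_subadditive[of E lebesgue "T - E"] Em Tm by auto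
  qed
  also have "\<dots> < ennreal (measure lebesgue E) + ennreal (c - measure lebesgue E)"
    using T(4) Ee by (simp add: ennreal_add_left_cancel_less del: ennreal_plus)
  also have "\<dots> = ennreal c" using mE
    by (subst ennreal_plus[symmetric]) auto
  finally have Fc: "emeasure lebesgue F < ennreal c" .
  have Fl: "F \<in> lmeasurable"
    using Fm Fs by (intro bounded_set_imp_lmeasurable bounded_subset[OF bounded_closed_interval[of a b]]) auto
  have Fe: "emeasure lebesgue F = ennreal (measure lebesgue F)"
    using Fl by (simp add: emeasure_eq_measure2)
  have mF: "measure lebesgue F < c" using Fc Fe by (simp add: ennreal_less_iff)
  have "\<theta>^Suc k \<le> \<theta>" using th by (simp add: power_le_one mult_left_le)
  then have "c \<le> \<theta> * (b - a)" unfolding c_def using ab by (simp add: mult_right_mono)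
  then have small: "measure lebesgue F \<le> \<theta> * (b - a)" using mF by simp
  have Fo: "\<exists>r>0. \<forall>y. a \<le> y \<longrightarrow> y < b \<longrightarrow> \<bar>y - x\<bar> < r \<longrightarrow> y \<in> F" if "x \<in> F" for x
  proof -
    have "x \<in> T" using that F_def by auto
    then obtain r where "r > 0" "\<And>y. dist y x < r \<Longrightarrow> y \<in> T" using T(1) open_dist by metis
    then show ?thesis unfolding F_def by (intro exI[of _ r]) (auto simp: dist_real_def)
  qed
  obtain \<Omega> where O: "\<Omega> \<in> sets lebesgue" "\<Omega> \<subseteq> {a..<b}" "2 * emeasure N F \<le> emeasure N \<Omega>"
    "ennreal \<theta> * emeasure lebesgue \<Omega> \<le> emeasure lebesgue F"
    using cz_step[OF sN th H nullN ab Fm Fs Fo small] by blast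
  have Ol: "\<Omega> \<in> lmeasurable"
    using O by (intro bounded_set_imp_lmeasurable bounded_subset[OF bounded_closed_interval[of a b]]) auto
  have Oe: "emeasure lebesgue \<Omega> = ennreal (measure lebesgue \<Omega>)"
    using Ol by (simp add: emeasure_eq_measure2)
  have "ennreal (\<theta> * measure lebesgue \<Omega>) < ennreal c"
    using O(4) Fc Oe th by (simp add: ennreal_mult)
  moreover have "0 \<le> \<theta> * measure lebesgue \<Omega>" using th by simp
  ultimately have "\<theta> * measure lebesgue \<Omega> < c" using ennreal_less_iff by blast
  then have "measure lebesgue \<Omega> < \<theta>^k * (b - a)" unfolding c_def using th by (simp add: mult.assoc)
  then have Olt: "emeasure lebesgue \<Omega> < ennreal (\<theta>^k * (b - a))" using Oe
    by (simp add: ennreal_less_iff)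
  have IH: "2^k * emeasure N \<Omega> \<le> emeasure N {a..b}"
  proof -
    have "\<Omega> \<subseteq> {a..b}" using O(2) by auto
    then show ?thesis using Suc.IH[OF ab O(1) _ Olt] by blast
  qed
  have "{b} \<in> sets lebesgue" by simp
  with Fm have "F \<union> {b} \<in> sets lebesgue" by (rule sets.Un)
  then have "emeasure N E \<le> emeasure N (F \<union> {b})"
    using T(2) Es sN by (intro emeasure_mono) (auto simp: F_def)
  also have "\<dots> \<le> emeasure N F + emeasure N {b}" using Fm sN by (intro emeasure_subadditive) auto
  also have "\<dots> = emeasure N F" using nullN by simp
  finally have EF: "emeasure N E \<le> emeasure N F" .
  have "2^Suc k * emeasure N E = 2^k * (2 * emeasure N E)" by (simp add: mult_ac)
  also have "\<dots> \<le> 2^k * (2 * emeasure N F)" using EF by (intro mult_left_mono) auto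
  also have "\<dots> \<le> 2^k * emeasure N \<Omega>" using O(3) by (intro mult_left_mono) auto
  also have "\<dots> \<le> emeasure N {a..b}" using IH .
  finally show ?case .
qed


lemma nu_sets_eq: "sets (nu u) = sets lebesgue" by simp

lemma umeas_le:
  assumes wu: "weight_R u" and E: "E \<in> sets lebesgue" "E \<subseteq> {a..b}"
  shows "umeas u E \<le> umeas u {a..b}" "0 \<le> umeas u E"
proof -
  have "emeasure (nu u) E \<le> emeasure (nu u) {a..b}" using E by (intro emeasure_mono) auto
  moreover have "emeasure (nu u) {a..b} < \<infinity>" using umeas_nu(2)[OF wu _ order_refl, of a b] by simp
  ultimately show "umeas u E \<le> umeas u {a..b}"
    using umeas_nu(1)[OF wu E] umeas_nu(1)[OF wu _ order_refl, of a b]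
    by (simp add: enn2real_mono)
  show "0 \<le> umeas u E" using umeas_nu(1)[OF wu E] by simp
qed

lemma back_half:
  assumes wu: "weight_R u" and wp: "weight_pos w" and ni: "\<not> set_integrable lebesgue {0<..} w"
    and d: "Delta2 w"
    and R: "\<forall>\<epsilon>>0. \<exists>\<eta>. 0 < \<eta> \<and> \<eta> < 1 \<and>
       (\<forall>a b S. a < b \<longrightarrow> S \<in> sets lebesgue \<longrightarrow> S \<subseteq> {a..b} \<longrightarrow>
          measure lebesgue S \<le> \<eta> * (b - a) \<longrightarrow>
          Wfun w (umeas u S) \<le> \<epsilon> * Wfun w (umeas u {a..b}))"
  obtains \<eta> where "0 < \<eta>" "\<eta> < 1" "\<And>a b S. a < b \<Longrightarrow> S \<in> sets lebesgue \<Longrightarrow> S \<subseteq> {a..b} \<Longrightarrow>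
          measure lebesgue S \<le> \<eta> * (b - a) \<Longrightarrow> 2 * umeas u S \<le> umeas u {a..b}"
proof -
  obtain D where D: "D > 0" "\<And>r. r > 0 \<Longrightarrow> Wfun w (2*r) \<le> D * Wfun w r"
    using Delta2_D[OF wp ni d] by blast
  obtain \<eta> where eta: "0 < \<eta>" "\<eta> < 1" and
    Re: "\<And>a b S. a < b \<Longrightarrow> S \<in> sets lebesgue \<Longrightarrow> S \<subseteq> {a..b} \<Longrightarrow>
          measure lebesgue S \<le> \<eta> * (b - a) \<Longrightarrow> Wfun w (umeas u S) \<le> 1/(2*D) * Wfun w (umeas u {a..b})"
    using R[rule_format, of "1/(2*D)"] D(1) by auto
  show ?thesis
  proof (rule that[OF eta])
    fix a b S assume ab: "a < b" and S: "S \<in> sets lebesgue" "S \<subseteq> {a..b}" and mS: "measure lebesgue S \<le> \<eta> * (b - a)"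
    define t where "t = umeas u {a..b}"
    have t0: "t > 0" using umeas_pos[OF wu ab] by (simp add: t_def)
    show "2 * umeas u S \<le> umeas u {a..b}"
    proof (rule ccontr)
      assume "\<not> ?thesis"
      then have "t / 2 \<le> umeas u S" by (simp add: t_def)
      then have "Wfun w (t/2) \<le> Wfun w (umeas u S)" by (rule W_mono[OF wp])
      also have "\<dots> \<le> 1/(2*D) * Wfun w t" using Re[OF ab S mS] by (simp add: t_def)
      finally have h1: "Wfun w (t/2) \<le> 1/(2*D) * Wfun w t" .
      have h2: "Wfun w t \<le> D * Wfun w (t/2)" using D(2)[of "t/2"] t0 by simp
      have h3: "Wfun w t > 0" using W_pos[OF wp ni d t0] .
      have "D * Wfun w (t/2) \<le> D * (1/(2*D) * Wfun w t)" by (rule mult_left_mono[OF h1]) (use D(1) in simp)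
      also have "\<dots> = Wfun w t / 2" using D(1) by (simp add: field_simps)
      finally show False using h2 h3 by linarith
    qed
  qed
qed


lemma nu_eq:
  assumes wu: "weight_R u" and E: "E \<in> sets lebesgue" "E \<subseteq> {a..b}"
  shows "emeasure (nu u) E = ennreal (umeas u E)"
  using umeas_nu[OF wu E] by simp

lemma bounded_lmeas:
  assumes "E \<in> sets lebesgue" "E \<subseteq> {a..b::real}"
  shows "E \<in> lmeasurable" "emeasure lebesgue E = ennreal (measure lebesgue E)"
    "a \<le> b \<Longrightarrow> measure lebesgue E \<le> b - a"
proof -
  show El: "E \<in> lmeasurable"
    using assms by (intro bounded_set_imp_lmeasurable bounded_subset[OF bounded_closed_interval[of a b]]) auto
  then show "emeasure lebesgue E = ennreal (measure lebesgue E)" by (simp add: emeasure_eq_measure2)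
  have "measure lebesgue E \<le> measure lebesgue {a..b}"
    using assms by (intro measure_mono_fmeasurable) auto
  also have "\<dots> \<le> b - a" if "a \<le> b" using that by simp
  finally show "a \<le> b \<Longrightarrow> measure lebesgue E \<le> b - a" .
qed

lemma back_A:
  assumes wu: "weight_R u" and eta: "0 < \<eta>" "\<eta> < 1"
    and half: "\<And>a b S. a < b \<Longrightarrow> S \<in> sets lebesgue \<Longrightarrow> S \<subseteq> {a..b} \<Longrightarrow>
          measure lebesgue S \<le> \<eta> * (b - a) \<Longrightarrow> 2 * umeas u S \<le> umeas u {a..b}"
  shows "A_infty u"
proof -
  define \<theta> where "\<theta> = \<eta> / 2"
  have th: "0 < \<theta>" "\<theta> < 1/2" using eta by (auto simp: \<theta>_def)
  have H: "2 * emeasure (nu u) S \<le> emeasure (nu u) {a..b}"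
    if ab: "a < b" and S: "S \<in> sets lebesgue" "S \<subseteq> {a..b}"
      and le: "emeasure lebesgue S \<le> ennreal (2*\<theta>*(b-a))" for a b S
  proof -
    have "ennreal (measure lebesgue S) \<le> ennreal (\<eta> * (b - a))"
      using le bounded_lmeas(2)[OF S] by (simp add: \<theta>_def)
    then have "measure lebesgue S \<le> \<eta> * (b - a)" using eta ab by (subst (asm) ennreal_le_iff) auto
    then have "2 * umeas u S \<le> umeas u {a..b}" using half[OF ab S] by blast
    then have "ennreal (2 * umeas u S) \<le> ennreal (umeas u {a..b})" by (rule ennreal_leI)
    then show ?thesis using nu_eq[OF wu S] nu_eq[OF wu _ order_refl, of a b] umeas_le(2)[OF wu S]
      by (simp add: ennreal_mult)
  qed
  have nullN: "emeasure (nu u) {x} = 0" for x by (rule nu_null[OF wu]) simp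
  define \<delta> where "\<delta> = ln 2 / ln (1 / \<theta>)"
  have l2: "ln 2 < ln (1/\<theta>)" using th by (subst ln_less_cancel_iff) (auto simp: field_simps)
  have ln2: "0 < (ln 2 :: real)" by simp
  have pos: "0 < ln (1/\<theta>)" using l2 ln2 by linarith
  have d: "0 < \<delta>" "\<delta> < 1" unfolding \<delta>_def using l2 ln2 pos
    by (simp_all add: pos_divide_less_eq[OF pos])
  have thd: "\<theta> powr \<delta> = 1/2"
  proof -
    have "ln (1/\<theta>) = - ln \<theta>" using th by (simp add: ln_div)
    then have "\<delta> * ln \<theta> = - ln 2" unfolding \<delta>_def using l2 ln2 by (auto simp: field_simps)
    then show ?thesis using th by (simp add: powr_def exp_minus)
  qed
  have thpow: "(\<theta>^n) powr \<delta> = (1/2)^n" for n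
  proof -
    have "(\<theta>^n) powr \<delta> = (\<theta> powr real n) powr \<delta>" using th by (simp add: powr_realpow)
    also have "\<dots> = \<theta> powr (real n * \<delta>)" by (simp add: powr_powr)
    also have "\<dots> = (\<theta> powr \<delta>)^n" using th by (simp add: powr_power)
    finally show ?thesis using thd by simp
  qed
  have main: "umeas u E / umeas u {a..b} \<le> 2 * (measure lebesgue E / (b - a)) powr \<delta>"
    if ab: "a < b" and E: "E \<in> sets lebesgue" "E \<subseteq> {a..b}" for a b :: real and E :: "real set"
  proof -
    define x where "x = measure lebesgue E / (b - a)"
    have x01: "0 \<le> x" "x \<le> 1" using bounded_lmeas(3)[OF E] ab by (auto simp: x_def field_simps)
    define uE where "uE = umeas u E"
    define uI where "uI = umeas u {a..b}"
    have uI: "uI > 0" using umeas_pos[OF wu ab] by (simp add: uI_def)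
    have uE: "0 \<le> uE" "uE \<le> uI" using umeas_le[OF wu E] by (auto simp: uE_def uI_def)
    have "uE / uI \<le> 2 * x powr \<delta>"
    proof (cases "\<theta> \<le> x")
      case True
      have "1/2 \<le> x powr \<delta>" using powr_mono2[of \<delta> \<theta> x] True th d thd by simp
      moreover have "uE / uI \<le> 1" using uE uI by simp
      ultimately show ?thesis by simp
    next
      case False
      show ?thesis
      proof (cases "x = 0")
        case True
        then have "measure lebesgue E = 0" using ab by (simp add: x_def)
        then have "emeasure lebesgue E = 0" using bounded_lmeas(2)[OF E] by simp
        then have "E \<in> null_sets lebesgue" using E by (simp add: null_setsI)
        then have "emeasure (nu u) E = 0" by (rule nu_null[OF wu])
        then have "uE = 0" using umeas_nu(1)[OF wu E] by (simp add: uE_def)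
        then show ?thesis using True by simp
      next
        case x0: False
        then have xp: "x > 0" using x01 by simp
        obtain n where n: "\<theta>^n < x" using real_arch_pow_inv[OF xp, of \<theta>] th by auto
        have ex: "\<exists>k. \<theta>^Suc k \<le> x"
        proof
          have "\<theta>^Suc n \<le> \<theta>^n" by (rule power_decreasing) (use th in auto)
          then show "\<theta>^Suc n \<le> x" using n by linarith
        qed
        define k where "k = (LEAST k. \<theta>^Suc k \<le> x)"
        have k1: "\<theta>^Suc k \<le> x" unfolding k_def by (rule LeastI_ex[OF ex])
        have k2: "x < \<theta>^k"
        proof (cases k)
          case 0 then show ?thesis using False th by simp
        next
          case (Suc j)
          then have "\<not> \<theta>^Suc j \<le> x" using not_less_Least[of j "\<lambda>k. \<theta>^Suc k \<le> x"] k_def by auto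
          then show ?thesis using Suc by simp
        qed
        have "measure lebesgue E < \<theta>^k * (b - a)" using k2 ab by (simp add: x_def field_simps)
        then have Elt: "emeasure lebesgue E < ennreal (\<theta>^k * (b - a))"
          using bounded_lmeas(2)[OF E] by (simp add: ennreal_less_iff)
        have "2^k * emeasure (nu u) E \<le> emeasure (nu u) {a..b}"
          by (rule cz_induct[OF sets_nu th H nullN ab E Elt]) auto
        moreover have "ennreal (2^k * uE) = 2^k * ennreal uE"
          using uE ennreal_power[of 2 k] by (simp add: ennreal_mult)
        ultimately have "ennreal (2^k * uE) \<le> ennreal uI"
          using nu_eq[OF wu E] nu_eq[OF wu _ order_refl, of a b]
          by (simp add: uE_def uI_def)
        then have "2^k * uE \<le> uI" using uI by (subst (asm) ennreal_le_iff) auto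
        then have "uE / uI \<le> 1 / 2^k" using uI by (simp add: field_simps)
        also have "\<dots> = 2 * (\<theta>^Suc k) powr \<delta>" unfolding thpow by (simp add: power_one_over)
        also have "\<dots> \<le> 2 * x powr \<delta>" using k1 th d by (simp add: powr_mono2)
        finally show ?thesis .
      qed
    qed
    then show "umeas u E / umeas u {a..b} \<le> 2 * (measure lebesgue E / (b - a)) powr \<delta>"
      by (simp add: uE_def uI_def x_def)
  qed
  have two: "(2::real) > 0" by simp
  show ?thesis unfolding A_infty_def using main d two by blast
qed


lemma u_values:
  assumes wu: "weight_R u" and ni: "\<not> integrable lebesgue u" and t: "t > 0"
  obtains a b where "a < b" "umeas u {a..b} = t"
proof -
  define A where "A n = {-real n..real n}" for n :: nat
  have big: "\<exists>n::nat. t \<le> umeas u (A n)"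
  proof (rule ccontr)
    assume "\<not> ?thesis"
    then have lt: "umeas u (A n) < t" for n by (simp add: not_le)
    have rA: "range A \<subseteq> sets (nu u)" unfolding A_def by auto
    have iA: "incseq A" unfolding A_def incseq_def by auto
    have UA: "(\<Union>n. A n) = UNIV"
    proof -
      have "x \<in> (\<Union>n. A n)" for x
      proof -
        obtain n :: nat where "\<bar>x\<bar> \<le> real n" using real_arch_simple by blast
        then have "x \<in> A n" unfolding A_def by auto
        then show ?thesis by blast
      qed
      then show ?thesis by auto
    qed
    have "emeasure (nu u) (A n) \<le> ennreal t" for n
      using nu_eq[OF wu _ order_refl, of "-real n" "real n"] lt[of n] unfolding A_def
      by (simp add: ennreal_leI less_imp_le)
    then have "(SUP n. emeasure (nu u) (A n)) \<le> ennreal t" by (rule SUP_least)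
    then have "emeasure (nu u) UNIV \<le> ennreal t" using SUP_emeasure_incseq[OF rA iA] UA by simp
    then have fin: "emeasure (nu u) UNIV < \<infinity>" using le_less_trans by fastforce
    have um[measurable]: "u \<in> borel_measurable lebesgue" by (rule weight_R_meas[OF wu])
    have "emeasure (nu u) UNIV = (\<integral>\<^sup>+ x. ennreal (u x) \<partial>lebesgue)"
      using emeasure_nu[OF wu, of UNIV] by simp
    also have "\<dots> = (\<integral>\<^sup>+ x. ennreal (norm (u x)) \<partial>lebesgue)"
    proof (rule nn_integral_cong_AE)
      show "AE x in lebesgue. ennreal (u x) = ennreal (norm (u x))"
        using wu unfolding weight_R_def by (auto elim!: AE_mp)
    qed
    finally have "(\<integral>\<^sup>+ x. ennreal (norm (u x)) \<partial>lebesgue) < \<infinity>" using fin by simp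
    then have "integrable lebesgue u" by (intro integrableI_bounded um)
    then show False using ni by simp
  qed
  then obtain n :: nat where n: "t \<le> umeas u (A n)" by blast
  have iu: "u integrable_on {-real n..real n}"
    using set_lebesgue_integral_eq_integral(1)[of "{-real n..real n}" u] wu unfolding weight_R_def by auto
  have i1: "u integrable_on {0..real n}" by (rule integrable_on_subinterval[OF iu]) auto
  have i2: "u integrable_on {-real n..0}" by (rule integrable_on_subinterval[OF iu]) auto
  define F where "F s = integral {-s..0} u + integral {0..s} u" for s
  have Feq: "F s = umeas u {-s..s}" if "0 \<le> s" "s \<le> real n" for s
  proof -
    have si: "set_integrable lebesgue {-s..s} u" using wu unfolding weight_R_def by auto
    have "u integrable_on {-s..s}" by (rule integrable_on_subinterval[OF iu]) (use that in auto)
    then have "integral {-s..0} u + integral {0..s} u = integral {-s..s} u"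
      by (rule Henstock_Kurzweil_Integration.integral_combine[rotated 2]) (use that in auto)
    also have "\<dots> = umeas u {-s..s}"
      unfolding umeas_def using set_lebesgue_integral_eq_integral(2)[OF si] by simp
    finally show ?thesis by (simp add: F_def)
  qed
  have c1: "continuous_on {0..real n} (\<lambda>s. integral {0..s} u)"
    by (rule indefinite_integral_continuous_1[OF i1])
  have c2': "continuous_on {-real n..0} (\<lambda>x. integral {x..0} u)"
    by (rule indefinite_integral_continuous_1'[OF i2])
  have c2: "continuous_on {0..real n} (\<lambda>s. integral {-s..0} u)"
    by (rule continuous_on_compose2[OF c2', of _ uminus]) (auto intro: continuous_intros)
  have cF: "continuous_on {0..real n} F" unfolding F_def by (intro continuous_on_add c1 c2)
  have F0: "F 0 = 0" by (simp add: F_def)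
  have Fn: "t \<le> F (real n)" using n Feq[of "real n"] by (simp add: A_def)
  obtain s where s: "0 \<le> s" "s \<le> real n" "F s = t"
    using IVT'[of F 0 t "real n", OF _ Fn _ cF] F0 t by auto
  have "s \<noteq> 0" using s F0 t by auto
  then have "-s < s" using s by simp
  moreover have "umeas u {-s..s} = t" using Feq[OF s(1,2)] s(3) by simp
  ultimately show ?thesis using that by blast
qed


lemma umeas_combine:
  assumes wu: "weight_R u" and "c \<le> d" "d \<le> e"
  shows "umeas u {c..e} = umeas u {c..d} + umeas u {d..e}"
proof -
  have si: "set_integrable lebesgue {x..y} u" for x y using wu unfolding weight_R_def by auto
  have ue: "umeas u {x..y} = integral {x..y} u" for x y
    unfolding umeas_def using set_lebesgue_integral_eq_integral(2)[OF si] by simp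
  have "u integrable_on {c..e}" using set_lebesgue_integral_eq_integral(1)[OF si] by simp
  then show ?thesis unfolding ue
    by (rule Henstock_Kurzweil_Integration.integral_combine[rotated 2, symmetric]) (use assms in auto)
qed

lemma umeas_point: "weight_R u \<Longrightarrow> umeas u {c..c} = 0"
  using umeas_nu(1)[of u "{c..c}" c c] nu_null[of u "{c}"] by simp

lemma back_dec:
  assumes wu: "weight_R u" and niu: "\<not> integrable lebesgue u" and wp: "weight_pos w"
    and R: "\<forall>\<epsilon>>0. \<exists>\<eta>. 0 < \<eta> \<and> \<eta> < 1 \<and>
       (\<forall>a b S. a < b \<longrightarrow> S \<in> sets lebesgue \<longrightarrow> S \<subseteq> {a..b} \<longrightarrow>
          measure lebesgue S \<le> \<eta> * (b - a) \<longrightarrow>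
          Wfun w (umeas u S) \<le> \<epsilon> * Wfun w (umeas u {a..b}))"
  obtains N :: nat where "N \<ge> 2" "\<And>t. t > 0 \<Longrightarrow> Wfun w (t / N) \<le> Wfun w t / 2"
proof -
  obtain \<eta> where eta: "0 < \<eta>" "\<eta> < 1" and
    Re: "\<And>a b S. a < b \<Longrightarrow> S \<in> sets lebesgue \<Longrightarrow> S \<subseteq> {a..b} \<Longrightarrow>
          measure lebesgue S \<le> \<eta> * (b - a) \<Longrightarrow> Wfun w (umeas u S) \<le> 1/2 * Wfun w (umeas u {a..b})"
    using R[rule_format, of "1/2"] by auto
  define N where "N = nat \<lceil>1/\<eta>\<rceil>"
  have "1 < 1/\<eta>" using eta by (simp add: field_simps)
  then have N2: "N \<ge> 2" unfolding N_def by linarith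
  have NN: "1/\<eta> \<le> real N" unfolding N_def by linarith
  then have Ne: "1 / real N \<le> \<eta>" using eta N2 by (simp add: field_simps)
  have dec: "Wfun w (t / N) \<le> Wfun w t / 2" if t: "t > 0" for t
  proof -
    obtain a b where ab: "a < b" "umeas u {a..b} = t" using u_values[OF wu niu t] by blast
    define p where "p i = a + real i * (b - a) / real N" for i :: nat
    have pm: "p i \<le> p (Suc i)" for i using ab N2 by (simp add: p_def field_simps)
    have tel: "(\<Sum>i<m. umeas u {p i..p (Suc i)}) = umeas u {a..p m}" for m
    proof (induction m)
      case 0 then show ?case using umeas_point[OF wu, of a] by (simp add: p_def)
    next
      case (Suc m)
      have "a \<le> p m" using ab N2 by (simp add: p_def)
      then show ?case using Suc umeas_combine[OF wu _ pm[of m], of a] by simp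
    qed
    have pN: "p N = b" using N2 by (simp add: p_def)
    have "\<exists>i<N. t / N \<le> umeas u {p i..p (Suc i)}"
    proof (rule ccontr)
      assume "\<not> ?thesis"
      then have lt: "\<And>i. i < N \<Longrightarrow> umeas u {p i..p (Suc i)} < t / N" by (simp add: not_le)
      have "(\<Sum>i<N. umeas u {p i..p (Suc i)}) < (\<Sum>i<N. t / N)"
      proof (rule sum_strict_mono)
        have "0 \<in> {..<N}" using N2 by simp
        then show "{..<N} \<noteq> {}" by blast
      qed (use lt in auto)
      also have "\<dots> = t" using N2 by simp
      finally show False using tel[of N] pN ab by simp
    qed
    then obtain i where i: "i < N" "t / N \<le> umeas u {p i..p (Suc i)}" by blast
    have sub: "{p i..p (Suc i)} \<subseteq> {a..b}"
    proof -
      have "a \<le> p i" using ab N2 by (simp add: p_def)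
      moreover have "p (Suc i) \<le> b"
      proof -
        have "real (Suc i) * (b - a) / real N \<le> real N * (b - a) / real N"
          using i ab by (intro divide_right_mono mult_right_mono) auto
        then show ?thesis using N2 by (simp add: p_def)
      qed
      ultimately show ?thesis by auto
    qed
    have dp: "p (Suc i) - p i = (b - a) / N" using N2 unfolding p_def
      by (simp add: field_simps)
    have "measure lebesgue {p i..p (Suc i)} = (b - a) / N"
      using pm[of i] dp by simp
    also have "\<dots> \<le> \<eta> * (b - a)"
    proof -
      have "(b - a) * (1 / real N) \<le> (b - a) * \<eta>" using Ne ab by (intro mult_left_mono) auto
      then show ?thesis by (simp add: mult.commute)
    qed
    finally have "Wfun w (umeas u {p i..p (Suc i)}) \<le> 1/2 * Wfun w (umeas u {a..b})"
      using Re[OF ab(1) _ sub] by simp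
    moreover have "Wfun w (t / N) \<le> Wfun w (umeas u {p i..p (Suc i)})" using W_mono[OF wp i(2)] .
    ultimately show ?thesis using ab by simp
  qed
  show ?thesis using that[OF N2 dec] .
qed


lemma dec_Bstar:
  assumes wp: "weight_pos w" and N2: "N \<ge> (2::nat)"
    and dec: "\<And>t. t > 0 \<Longrightarrow> Wfun w (t / N) \<le> Wfun w t / 2"
  shows "B_star_infty w"
proof -
  define \<alpha> where "\<alpha> = ln 2 / ln (real N)"
  have N1: "real N > 1" using N2 by simp
  have lN: "ln 2 \<le> ln (real N)" using N2 by simp
  have ln2: "(0::real) < ln 2" by simp
  have lNp: "0 < ln (real N)" using N1 by simp
  have a0: "0 < \<alpha>" unfolding \<alpha>_def using ln2 lNp by simp
  have a1: "\<alpha> \<le> 1" unfolding \<alpha>_def using lN lNp by (simp add: divide_le_eq_1)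
  have Npow: "real N powr \<alpha> = 2"
  proof -
    have "\<alpha> * ln (real N) = ln 2" unfolding \<alpha>_def using lNp by simp
    then show ?thesis using N1 by (simp add: powr_def)
  qed
  have Npowm: "(real N ^ m) powr \<alpha> = 2 ^ m" for m
  proof -
    have "(real N ^ m) powr \<alpha> = (real N powr real m) powr \<alpha>" using N1 by (simp add: powr_realpow)
    also have "\<dots> = real N powr (real m * \<alpha>)" by (simp add: powr_powr)
    also have "\<dots> = (real N powr \<alpha>)^m" using N1 by (simp add: powr_power)
    finally show ?thesis using Npow by simp
  qed
  have iter: "Wfun w (r / real N ^ k) \<le> (1/2)^k * Wfun w r" if r: "r > 0" for r k
  proof (induction k)
    case 0 then show ?case by simp
  next
    case (Suc k)
    have "r / real N ^ k > 0" using r N1 by simp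
    then have "Wfun w ((r / real N ^ k) / real N) \<le> Wfun w (r / real N ^ k) / 2" by (rule dec)
    also have "\<dots> \<le> (1/2)^k * Wfun w r / 2" using Suc by simp
    finally show ?case by (simp add: field_simps)
  qed
  have point: "Wfun w s \<le> 2 * (s / r) powr \<alpha> * Wfun w r" if s: "0 < s" "s \<le> r" for s r
  proof -
    have r: "r > 0" using s by simp
    obtain n where n: "r / s < real N ^ n" using real_arch_pow[OF N1] by blast
    have ex: "\<exists>k. r / real N ^ Suc k < s"
    proof
      have "r / real N ^ Suc n \<le> r / real N ^ n" using r N1
        by (intro divide_left_mono) (auto simp: power_increasing)
      also have "\<dots> < s" using n s N1 by (simp add: field_simps)
      finally show "r / real N ^ Suc n < s" .
    qed
    define k where "k = (LEAST k. r / real N ^ Suc k < s)"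
    have k1: "r / real N ^ Suc k < s" unfolding k_def by (rule LeastI_ex[OF ex])
    have k2: "s \<le> r / real N ^ k"
    proof (cases k)
      case 0 then show ?thesis using s by simp
    next
      case (Suc j)
      then have "\<not> r / real N ^ Suc j < s" using not_less_Least[of j "\<lambda>k. r / real N ^ Suc k < s"] k_def by auto
      then show ?thesis using Suc by simp
    qed
    have "Wfun w s \<le> Wfun w (r / real N ^ k)" by (rule W_mono[OF wp k2])
    also have "\<dots> \<le> (1/2)^k * Wfun w r" by (rule iter[OF r])
    also have "\<dots> = 2 * (1 / (real N ^ Suc k)) powr \<alpha> * Wfun w r"
    proof -
      have "(1 / real N ^ Suc k) powr \<alpha> = 1 powr \<alpha> / (real N ^ Suc k) powr \<alpha>"
        by (rule powr_divide)
      also have "\<dots> = 1 / 2 ^ Suc k" unfolding Npowm by simp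
      finally have e: "(1 / real N ^ Suc k) powr \<alpha> = 1 / 2 ^ Suc k" .
      show ?thesis unfolding e by (simp add: power_one_over)
    qed
    also have "\<dots> \<le> 2 * (s / r) powr \<alpha> * Wfun w r"
    proof -
      have "1 / real N ^ Suc k \<le> s / r" using k1 r N1 by (simp add: field_simps)
      then have "(1 / (real N ^ Suc k)) powr \<alpha> \<le> (s / r) powr \<alpha>"
        using a0 N1 by (intro powr_mono2) auto
      then show ?thesis using W_nonneg[OF wp, of r] by (intro mult_right_mono) auto
    qed
    finally show ?thesis .
  qed
  have main: "(\<integral>\<^sup>+ t\<in>{0<..r}. ennreal (Wfun w t / t) \<partial>lebesgue) \<le> ennreal (2 / \<alpha> * Wfun w r)"
    if r: "r > 0" for r
  proof -
    define K where "K = 2 * Wfun w r / r powr \<alpha>"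
    have K0: "K \<ge> 0" unfolding K_def using W_nonneg[OF wp, of r] by simp
    have hi0: "((\<lambda>x. x powr (\<alpha> - 1)) has_integral (r powr (\<alpha> - 1 + 1) / (\<alpha> - 1 + 1))) {0..r}"
      by (rule has_integral_powr_from_0) (use a0 r in auto)
    have hi: "((\<lambda>x. K * x powr (\<alpha> - 1)) has_integral (K * (r powr \<alpha> / \<alpha>))) {0..r}"
      using has_integral_mult_right[OF hi0, of K] by simp
    have "(\<integral>\<^sup>+ t\<in>{0<..r}. ennreal (Wfun w t / t) \<partial>lebesgue)
        \<le> (\<integral>\<^sup>+ t. ennreal (indicator {0..r} t * (K * t powr (\<alpha> - 1))) \<partial>lebesgue)"
    proof (rule nn_integral_mono)
      fix t
      show "ennreal (Wfun w t / t) * indicator {0<..r} t \<le> ennreal (indicator {0..r} t * (K * t powr (\<alpha> - 1)))"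
      proof (cases "t \<in> {0<..r}")
        case True
        then have t: "0 < t" "t \<le> r" by auto
        have "Wfun w t / t \<le> 2 * (t / r) powr \<alpha> * Wfun w r / t"
          using point[OF t] t by (simp add: divide_right_mono)
        also have "\<dots> = K * t powr (\<alpha> - 1)"
          using t r unfolding K_def by (simp add: powr_divide powr_diff field_simps)
        finally show ?thesis using True by (auto simp: indicator_def intro: ennreal_leI)
      next
        case False
        then show ?thesis by (auto simp: indicator_def)
      qed
    qed
    also have "\<dots> = (\<integral>\<^sup>+ t. ennreal (indicator {0..r} t * (K * t powr (\<alpha> - 1))) \<partial>lborel)"
      by (simp add: nn_integral_completion)
    also have "\<dots> = ennreal (K * (r powr \<alpha> / \<alpha>))"
      by (rule nn_integral_has_integral_lebesgue[OF _ hi]) (use K0 in auto)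
    also have "K * (r powr \<alpha> / \<alpha>) = 2 / \<alpha> * Wfun w r" using r unfolding K_def by simp
    finally show ?thesis .
  qed
  show ?thesis unfolding B_star_infty_def using main by blast
qed


theorem proposition2p7:
  fixes u w :: "real \<Rightarrow> real"
  assumes "weight_R u" and "\<not> integrable lebesgue u"
    and "weight_pos w" and "\<not> set_integrable lebesgue {0<..} w" and "Delta2 w"
  shows "(A_infty u \<and> B_star_infty w) \<longleftrightarrow>
    (\<forall>\<epsilon>>0. \<exists>\<eta>. 0 < \<eta> \<and> \<eta> < 1 \<and>
       (\<forall>a b S. a < b \<longrightarrow> S \<in> sets lebesgue \<longrightarrow> S \<subseteq> {a..b} \<longrightarrow>
          measure lebesgue S \<le> \<eta> * (b - a) \<longrightarrow>
          Wfun w (umeas u S) \<le> \<epsilon> * Wfun w (umeas u {a..b})))"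
proof
  assume "A_infty u \<and> B_star_infty w"
  then show "\<forall>\<epsilon>>0. \<exists>\<eta>. 0 < \<eta> \<and> \<eta> < 1 \<and>
       (\<forall>a b S. a < b \<longrightarrow> S \<in> sets lebesgue \<longrightarrow> S \<subseteq> {a..b} \<longrightarrow>
          measure lebesgue S \<le> \<eta> * (b - a) \<longrightarrow>
          Wfun w (umeas u S) \<le> \<epsilon> * Wfun w (umeas u {a..b}))"
    using forward[OF assms(1) assms(3)] by blast
next
  assume R: "\<forall>\<epsilon>>0. \<exists>\<eta>. 0 < \<eta> \<and> \<eta> < 1 \<and>
       (\<forall>a b S. a < b \<longrightarrow> S \<in> sets lebesgue \<longrightarrow> S \<subseteq> {a..b} \<longrightarrow>
          measure lebesgue S \<le> \<eta> * (b - a) \<longrightarrow>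
          Wfun w (umeas u S) \<le> \<epsilon> * Wfun w (umeas u {a..b}))"
  obtain \<eta> where "0 < \<eta>" "\<eta> < 1" "\<And>a b S. a < b \<Longrightarrow> S \<in> sets lebesgue \<Longrightarrow> S \<subseteq> {a..b} \<Longrightarrow>
          measure lebesgue S \<le> \<eta> * (b - a) \<Longrightarrow> 2 * umeas u S \<le> umeas u {a..b}"
    using back_half[OF assms(1) assms(3) assms(4) assms(5) R] by blast
  then have "A_infty u" by (rule back_A[OF assms(1)])
  moreover obtain N :: nat where "N \<ge> 2" "\<And>t. t > 0 \<Longrightarrow> Wfun w (t / N) \<le> Wfun w t / 2"
    using back_dec[OF assms(1) assms(2) assms(3) R] by blast
  then have "B_star_infty w" by (rule dec_Bstar[OF assms(3)])
  ultimately show "A_infty u \<and> B_star_infty w" by blast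
qed

end
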